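(* For every reduced fraction $t\in(0,\infty)\cap\mathbb Q$, one has $\overline{\omega}_t=xyz\,\omega_t^{-1}$.
   Context: Modified lattice: the planar graph with vertex set $\mathbb Z^2$ whose edges are the horizontal unit segments, the vertical unit segments, and the diagonal segments of slope $-1$ joining $(i,j+1)$ and $(i+1,j)$. Words $\omega_t$: for reduced $t=p/q\in(0,\infty)$, let $L_t$ be the segment from $(0,0)$ to $(q,p)$, oriented from $(0,0)$ to $(q,p)$. List the edges whose relative interior meets $L_t$, in the order of the intersection points along $L_t$. A horizontal (resp. diagonal, vertical) edge contributes $x$ (resp. $y$, $z$) if its midpoint is not on the right-hand side of $L_t$ (including lying on $L_t$), and $x^{-1}$ (resp. $y^{-1}$, $z^{-1}$) if its midpoint is on the right-hand side. $\omega_t$ is the concatenation of these letters, viewed in the free group on $\{x,y,z\}$. Endpoint-completed word $\overline\omega_t$: choose $\varepsilon>0$ sufficiently small (so that the shifted segment has the same order of edge and triangle events away from the endpoints and passes through no lattice vertex and no edge midpoint), and let $\overline L_t$ be the segment from $(-\varepsilon,0)$ to $(q-\varepsilon,p)$, oriented from lower left to upper right. Read the edges crossed by $\overline L_t$ in order, with the half-open convention that the horizontal edge containing the initial endpoint $(-\varepsilon,0)$ is counted as crossed, while the edge containing the terminal endpoint is not counted. Assign letters by the same rule as for $\omega_t$ (horizontal/diagonal/vertical gives $x/y/z$ if the midpoint is not on the right-hand side of $\overline L_t$, and the inverse letter if it is). The resulting word is $\overline\omega_t$. *)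

theory Defs
  imports Complex_Main
begin

datatype gen = GX | GY | GZ

text \<open>A letter is a generator with a sign: True = the generator, False = its inverse.\<close>
type_synonym letter = "gen \<times> bool"
type_synonym word = "letter list"

definition inv_letter :: "letter \<Rightarrow> letter" where
  "inv_letter a = (fst a, \<not> snd a)"

definition word_inv :: "word \<Rightarrow> word" where
  "word_inv w = rev (map inv_letter w)"

inductive cancel1 :: "word \<Rightarrow> word \<Rightarrow> bool" where
  "cancel1 (u @ [a, inv_letter a] @ v) (u @ v)"

definition fg_eq :: "word \<Rightarrow> word \<Rightarrow> bool" where
  "fg_eq = equivclp cancel1"

text \<open>Edges: H i j joins (i,j),(i+1,j); V i j joins (i,j),(i,j+1);
  D i j joins (i,j+1),(i+1,j) (slope -1).\<close>
datatype edge = H int int | V int int | D int int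

fun edge_end1 :: "edge \<Rightarrow> real \<times> real" where
  "edge_end1 (H i j) = (of_int i, of_int j)"
| "edge_end1 (V i j) = (of_int i, of_int j)"
| "edge_end1 (D i j) = (of_int i, of_int j + 1)"

fun edge_end2 :: "edge \<Rightarrow> real \<times> real" where
  "edge_end2 (H i j) = (of_int i + 1, of_int j)"
| "edge_end2 (V i j) = (of_int i, of_int j + 1)"
| "edge_end2 (D i j) = (of_int i + 1, of_int j)"

fun edge_gen :: "edge \<Rightarrow> gen" where
  "edge_gen (H i j) = GX"
| "edge_gen (D i j) = GY"
| "edge_gen (V i j) = GZ"

definition midpoint2 :: "edge \<Rightarrow> real \<times> real" where
  "midpoint2 e = ((fst (edge_end1 e) + fst (edge_end2 e)) / 2,
                  (snd (edge_end1 e) + snd (edge_end2 e)) / 2)"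

definition seg_pt :: "real \<times> real \<Rightarrow> real \<times> real \<Rightarrow> real \<Rightarrow> real \<times> real" where
  "seg_pt A B s = (fst A + s * (fst B - fst A), snd A + s * (snd B - snd A))"

definition right_side :: "real \<times> real \<Rightarrow> real \<times> real \<Rightarrow> real \<times> real \<Rightarrow> bool" where
  "right_side A B M \<longleftrightarrow>
     (fst B - fst A) * (snd M - snd A) - (snd B - snd A) * (fst M - fst A) < 0"

definition meets_at :: "real set \<Rightarrow> real \<times> real \<Rightarrow> real \<times> real \<Rightarrow> edge \<Rightarrow> real \<Rightarrow> bool" where
  "meets_at S A B e s \<longleftrightarrow> s \<in> S \<and>
     (\<exists>u. 0 < u \<and> u < 1 \<and> seg_pt A B s = seg_pt (edge_end1 e) (edge_end2 e) u)"

definition crossed :: "real set \<Rightarrow> real \<times> real \<Rightarrow> real \<times> real \<Rightarrow> edge set" where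
  "crossed S A B = {e. \<exists>s. meets_at S A B e s}"

definition cross_param :: "real set \<Rightarrow> real \<times> real \<Rightarrow> real \<times> real \<Rightarrow> edge \<Rightarrow> real" where
  "cross_param S A B e = (THE s. meets_at S A B e s)"

definition edge_letter :: "real \<times> real \<Rightarrow> real \<times> real \<Rightarrow> edge \<Rightarrow> letter" where
  "edge_letter A B e = (edge_gen e, \<not> right_side A B (midpoint2 e))"

definition read_word :: "real set \<Rightarrow> real \<times> real \<Rightarrow> real \<times> real \<Rightarrow> word" where
  "read_word S A B =
     map (edge_letter A B) (sorted_key_list_of_set (cross_param S A B) (crossed S A B))"

definition omega :: "rat \<Rightarrow> word" where
  "omega t = (let (p, q) = quotient_of t in
     read_word {0..1} (0, 0) (of_int q, of_int p))"

text \<open>Shifted segment from (-eps,0) to (q-eps,p), half-open [0,1): the initial edge is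
  counted, the terminal one is not.\<close>
definition omega_bar_eps :: "rat \<Rightarrow> real \<Rightarrow> word" where
  "omega_bar_eps t \<epsilon> = (let (p, q) = quotient_of t in
     read_word {0..<1} (- \<epsilon>, 0) (of_int q - \<epsilon>, of_int p))"

end

theory Submission
  imports Defs
begin

fun pe :: "int \<Rightarrow> int \<Rightarrow> real \<Rightarrow> edge \<Rightarrow> real" where
  "pe p q \<epsilon> (H i j) = of_int j / of_int p"
| "pe p q \<epsilon> (V i j) = (of_int i + \<epsilon>) / of_int q"
| "pe p q \<epsilon> (D i j) = (of_int i + of_int j + 1 + \<epsilon>) / (of_int p + of_int q)"

fun rel :: "edge \<Rightarrow> real \<Rightarrow> real \<Rightarrow> bool" where
  "rel (H i j) x y = (y = of_int j \<and> of_int i < x \<and> x < of_int i + 1)"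
| "rel (V i j) x y = (x = of_int i \<and> of_int j < y \<and> y < of_int j + 1)"
| "rel (D i j) x y = (x + y = of_int i + of_int j + 1 \<and> of_int i < x \<and> x < of_int i + 1)"

lemma seg_rel: "(\<exists>u. 0 < u \<and> u < 1 \<and> (x, y) = seg_pt (edge_end1 e) (edge_end2 e) u) \<longleftrightarrow> rel e x y"
proof (cases e)
  case (H i j)
  show ?thesis
  proof
    assume "\<exists>u. 0 < u \<and> u < 1 \<and> (x, y) = seg_pt (edge_end1 e) (edge_end2 e) u"
    then show "rel e x y" using H by (auto simp: seg_pt_def)
  next
    assume "rel e x y" then show "\<exists>u. 0 < u \<and> u < 1 \<and> (x, y) = seg_pt (edge_end1 e) (edge_end2 e) u"
      using H by (intro exI[of _ "x - of_int i"]) (auto simp: seg_pt_def)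
  qed
next
  case (V i j)
  show ?thesis
  proof
    assume "\<exists>u. 0 < u \<and> u < 1 \<and> (x, y) = seg_pt (edge_end1 e) (edge_end2 e) u"
    then show "rel e x y" using V by (auto simp: seg_pt_def)
  next
    assume "rel e x y" then show "\<exists>u. 0 < u \<and> u < 1 \<and> (x, y) = seg_pt (edge_end1 e) (edge_end2 e) u"
      using V by (intro exI[of _ "y - of_int j"]) (auto simp: seg_pt_def)
  qed
next
  case (D i j)
  show ?thesis
  proof
    assume "\<exists>u. 0 < u \<and> u < 1 \<and> (x, y) = seg_pt (edge_end1 e) (edge_end2 e) u"
    then show "rel e x y" using D by (auto simp: seg_pt_def)
  next
    assume "rel e x y" then show "\<exists>u. 0 < u \<and> u < 1 \<and> (x, y) = seg_pt (edge_end1 e) (edge_end2 e) u"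
      using D by (intro exI[of _ "x - of_int i"]) (auto simp: seg_pt_def algebra_simps)
  qed
qed

lemma betw: "of_int i < (x::real) \<Longrightarrow> x < of_int i + 1 \<Longrightarrow> x \<notin> \<int> \<and> \<lfloor>x\<rfloor> = i"
proof -
  assume a: "of_int i < (x::real)" "x < of_int i + 1"
  have "x \<notin> \<int>"
  proof
    assume "x \<in> \<int>" then obtain k where k: "x = of_int k" by (metis Ints_cases)
    with a have "i < k" "k < i + 1" by simp_all
    then show False by simp
  qed
  moreover have "\<lfloor>x\<rfloor> = i" using a by (metis floor_eq_iff less_imp_le)
  ultimately show ?thesis by simp
qed

lemma rel_info: "rel e x y \<Longrightarrow> e = (if x \<in> \<int> then V \<lfloor>x\<rfloor> \<lfloor>y\<rfloor> else if y \<in> \<int> then H \<lfloor>x\<rfloor> \<lfloor>y\<rfloor> else D \<lfloor>x\<rfloor> \<lfloor>y\<rfloor>)"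
proof (cases e)
  case (H i j)
  assume "rel e x y"
  with H have "y = of_int j" "of_int i < x" "x < of_int i + 1" by auto
  with betw[of i x] H show ?thesis by auto
next
  case (V i j)
  assume "rel e x y"
  with V have "x = of_int i" "of_int j < y" "y < of_int j + 1" by auto
  with betw[of j y] V show ?thesis by auto
next
  case (D i j)
  assume "rel e x y"
  with D have r: "y = of_int i + of_int j + 1 - x" "of_int i < x" "x < of_int i + 1" by auto
  then have "of_int j < y" "y < of_int j + 1" by auto
  with betw[of i x] betw[of j y] r D show ?thesis by auto
qed

lemma rel_unique: "rel e1 x y \<Longrightarrow> rel e2 x y \<Longrightarrow> e1 = e2"
  using rel_info by metis



fun ICS :: "int \<Rightarrow> int \<Rightarrow> edge \<Rightarrow> bool" where
  "ICS p q (H i j) = (0 \<le> j \<and> j < p \<and> i*p < j*q \<and> j*q \<le> i*p + p)"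
| "ICS p q (V i j) = (0 \<le> i \<and> i < q \<and> j*q \<le> i*p \<and> i*p < j*q + q)"
| "ICS p q (D i j) = (0 \<le> i+j+1 \<and> i+j+1 < p+q \<and> i*(p+q) < (i+j+1)*q \<and> (i+j+1)*q \<le> (i+1)*(p+q))"

fun ICL :: "int \<Rightarrow> int \<Rightarrow> edge \<Rightarrow> bool" where
  "ICL p q (H i j) = (0 \<le> j \<and> j \<le> p \<and> i*p < j*q \<and> j*q < i*p + p)"
| "ICL p q (V i j) = (0 \<le> i \<and> i \<le> q \<and> j*q < i*p \<and> i*p < j*q + q)"
| "ICL p q (D i j) = (0 \<le> i+j+1 \<and> i+j+1 \<le> p+q \<and> i*(p+q) < (i+j+1)*q \<and> (i+j+1)*q < (i+1)*(p+q))"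

lemma split_frac: "(a::real) + b \<noteq> 0 \<Longrightarrow> X / (a+b) * b - e + X / (a+b) * a = X - e"
proof -
  assume "a + b \<noteq> 0"
  have "X / (a+b) * b - e + X / (a+b) * a = X / (a+b) * (a+b) - e" by (simp add: distrib_left)
  with \<open>a + b \<noteq> 0\<close> show ?thesis by simp
qed

lemma nonneg_shift: "0 < (\<epsilon>::real) \<Longrightarrow> \<epsilon> < 1 \<Longrightarrow> (0 \<le> of_int i + \<epsilon>) \<longleftrightarrow> 0 \<le> i"
proof (cases "0 \<le> i")
  case False then have "i \<le> -1" by simp
  then have "real_of_int i \<le> -1" by linarith
  moreover assume "\<epsilon> < 1"
  ultimately show ?thesis using False by simp
qed simp

lemma sh1: "0 < \<delta> \<Longrightarrow> \<delta> < 1 \<Longrightarrow> (real_of_int a < real_of_int b - \<delta>) = (a < b)"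
proof -
  assume "0 < \<delta>" "\<delta> < 1"
  moreover have "a < b \<longleftrightarrow> a + 1 \<le> b" by auto
  moreover have "real_of_int a + 1 \<le> real_of_int b \<longleftrightarrow> a + 1 \<le> b" by linarith
  ultimately show ?thesis by (smt (verit) of_int_less_iff)
qed
lemma sh2: "0 < \<delta> \<Longrightarrow> \<delta> < 1 \<Longrightarrow> (real_of_int b - \<delta> < real_of_int a) = (b \<le> a)"
  using sh1[of \<delta> a "b"] by (smt (verit) of_int_le_iff of_int_less_iff sh1) 
lemma sh3: "0 < \<delta> \<Longrightarrow> \<delta> < 1 \<Longrightarrow> (real_of_int a < real_of_int b + \<delta>) = (a \<le> b)"
  by (smt (verit) of_int_le_iff sh2)
lemma sh4: "0 < \<delta> \<Longrightarrow> \<delta> < 1 \<Longrightarrow> (real_of_int b + \<delta> < real_of_int a) = (b < a)"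
  by (smt (verit) of_int_le_iff sh1)


fun NN :: "int \<Rightarrow> int \<Rightarrow> edge \<Rightarrow> int" where
  "NN p q (H i j) = j*q*(p+q)"
| "NN p q (V i j) = i*p*(p+q)"
| "NN p q (D i j) = (i+j+1)*p*q"

fun cc :: "int \<Rightarrow> int \<Rightarrow> edge \<Rightarrow> int" where
  "cc p q (H i j) = 0"
| "cc p q (V i j) = p*(p+q)"
| "cc p q (D i j) = p*q"

fun RR :: "int \<Rightarrow> int \<Rightarrow> edge \<Rightarrow> edge" where
  "RR p q (H i j) = H (q-1-i) (p-j)"
| "RR p q (V i j) = V (q-i) (p-1-j)"
| "RR p q (D i j) = D (q-1-i) (p-1-j)"

definition vv :: "int \<Rightarrow> int \<Rightarrow> edge \<Rightarrow> real" where
  "vv p q e = of_int q * snd (midpoint2 e) - of_int p * fst (midpoint2 e)"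

lemma ik: "linorder.insort_key (\<le>) f x xs = insort_key (f :: 'b \<Rightarrow> 'a::linorder) x xs"
  by (induct xs) (simp_all add: linorder.insort_key.simps[OF linorder_axioms])

lemma skl_eq: "linorder.sorted_key_list_of_set (\<le>) f A = sorted_key_list_of_set (f :: 'b \<Rightarrow> 'a::linorder) A"
proof -
  have "linorder.insort_key (\<le>) f = insort_key f" by (intro ext) (rule ik)
  then show ?thesis unfolding sorted_key_list_of_set_def linorder.sorted_key_list_of_set_def[OF linorder_axioms] by simp
qed

lemma skl_unique:
  fixes f :: "'b \<Rightarrow> 'a::linorder"
  assumes "finite A" "inj_on f A" "sorted_wrt (<) (map f l)" "set l = A"
  shows "sorted_key_list_of_set f A = l"
proof -
  interpret folding_insort_key "(\<le>) :: 'a \<Rightarrow> 'a \<Rightarrow> bool" "(<)" A f by unfold_locales (rule assms(2))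
  have "distinct (map f l)" using assms(3) by (simp add: strict_sorted_iff)
  then have "distinct l" by (simp add: distinct_map)
  then have "length l = card A" using assms(4) distinct_card by fastforce
  then have "linorder.sorted_key_list_of_set (\<le>) f A = l" using sorted_key_list_of_set_unique[of A l] assms by simp
  then show ?thesis by (simp add: skl_eq)
qed

lemma skl_props:
  fixes f :: "'b \<Rightarrow> 'a::linorder"
  assumes "finite A" "inj_on f A"
  shows "sorted_wrt (<) (map f (sorted_key_list_of_set f A)) \<and> set (sorted_key_list_of_set f A) = A"
proof -
  interpret folding_insort_key "(\<le>) :: 'a \<Rightarrow> 'a \<Rightarrow> bool" "(<)" A f by unfold_locales (rule assms(2))
  have "sorted_wrt (<) (map f (linorder.sorted_key_list_of_set (\<le>) f A))" by simp
  moreover have "set (linorder.sorted_key_list_of_set (\<le>) f A) = A" using assms by simp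
  ultimately show ?thesis by (simp add: skl_eq)
qed

context
  fixes p q :: int
  assumes p0: "0 < p" and q0: "0 < q" and cop: "coprime p q"
begin

lemma meets_iff:
  assumes "A = (- \<epsilon>, 0)" "B = (of_int q - \<epsilon>, of_int p)"
  shows "meets_at S A B e s \<longleftrightarrow> s \<in> S \<and> rel e (s * of_int q - \<epsilon>) (s * of_int p)"
proof -
  have "seg_pt A B s = (s * of_int q - \<epsilon>, s * of_int p)"
    using assms by (simp add: seg_pt_def algebra_simps)
  then show ?thesis unfolding meets_at_def using seg_rel by metis
qed

lemma rel_pe: "rel e (s * of_int q - \<epsilon>) (s * of_int p) \<Longrightarrow> s = pe p q \<epsilon> e"
  using p0 q0 by (cases e) (auto simp: field_simps)

lemma crossed_eq:
  assumes "A = (- \<epsilon>, 0)" "B = (of_int q - \<epsilon>, of_int p)"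
  shows "crossed S A B = {e. pe p q \<epsilon> e \<in> S \<and> rel e (pe p q \<epsilon> e * of_int q - \<epsilon>) (pe p q \<epsilon> e * of_int p)}"
  unfolding crossed_def meets_iff[OF assms] using rel_pe by auto

lemma cross_param_eq:
  assumes "A = (- \<epsilon>, 0)" "B = (of_int q - \<epsilon>, of_int p)" "e \<in> crossed S A B"
  shows "cross_param S A B e = pe p q \<epsilon> e"
  unfolding cross_param_def
proof (rule the_equality)
  show "meets_at S A B e (pe p q \<epsilon> e)"
    using assms(3) unfolding crossed_eq[OF assms(1,2)] meets_iff[OF assms(1,2)] by simp
next
  fix s assume "meets_at S A B e s" then show "s = pe p q \<epsilon> e"
    unfolding meets_iff[OF assms(1,2)] using rel_pe by auto
qed

lemma pe_inj:
  assumes "A = (- \<epsilon>, 0)" "B = (of_int q - \<epsilon>, of_int p)"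
  shows "inj_on (pe p q \<epsilon>) (crossed S A B)"
  unfolding crossed_eq[OF assms] by (rule inj_onI) (auto intro: rel_unique)

lemma cp_inj:
  assumes "A = (- \<epsilon>, 0)" "B = (of_int q - \<epsilon>, of_int p)"
  shows "inj_on (cross_param S A B) (crossed S A B)"
  using pe_inj[OF assms] cross_param_eq[OF assms] by (simp add: inj_on_def)


lemma CS_iff:
  assumes e0: "0 < \<epsilon>" and e1: "\<epsilon> * of_int p < 1" and e2: "\<epsilon> < 1"
  shows "(pe p q \<epsilon> e \<in> {0..<1} \<and> rel e (pe p q \<epsilon> e * of_int q - \<epsilon>) (pe p q \<epsilon> e * of_int p)) \<longleftrightarrow> ICS p q e"
proof -
  have P: "0 < real_of_int p" and Q: "0 < real_of_int q" using p0 q0 by auto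
  have d0: "0 < \<epsilon> * of_int p" using e0 P by simp
  show ?thesis
  proof (cases e)
    case (H i j)
    have a: "(of_int j / of_int p \<in> {0..<(1::real)}) \<longleftrightarrow> 0 \<le> j \<and> j < p"
      using P by (simp add: field_simps)
    have b: "(real_of_int i < of_int j / of_int p * of_int q - \<epsilon>) \<longleftrightarrow> real_of_int (i*p) < real_of_int (j*q) - \<epsilon> * of_int p"
      using P by (simp add: field_simps)
    have c: "(of_int j / of_int p * of_int q - \<epsilon> < real_of_int i + 1) \<longleftrightarrow> real_of_int (j*q) - \<epsilon> * of_int p < real_of_int (i*p + p)"
      using P by (simp add: field_simps)
    have y: "of_int j / of_int p * of_int p = (of_int j::real)" using P by simp
    show ?thesis by (simp only: H pe.simps rel.simps ICS.simps a b c y sh1[OF d0 e1] sh2[OF d0 e1] simp_thms conj_assoc)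
  next
    case (V i j)
    have a: "((of_int i + \<epsilon>) / of_int q \<in> {0..<(1::real)}) \<longleftrightarrow> 0 \<le> i \<and> i < q"
      using Q nonneg_shift[OF e0 e2, of i] sh4[OF e0 e2, of i q] by (simp add: field_simps)
    have b: "(real_of_int j < (of_int i + \<epsilon>) / of_int q * of_int p) \<longleftrightarrow> real_of_int (j*q) < real_of_int (i*p) + \<epsilon> * of_int p"
      using Q by (simp add: field_simps)
    have c: "((of_int i + \<epsilon>) / of_int q * of_int p < real_of_int j + 1) \<longleftrightarrow> real_of_int (i*p) + \<epsilon> * of_int p < real_of_int (j*q + q)"
      using Q by (simp add: field_simps)
    have y: "(of_int i + \<epsilon>) / of_int q * of_int q - \<epsilon> = (of_int i::real)" using Q by simp
    show ?thesis by (simp only: V pe.simps rel.simps ICS.simps a b c y sh3[OF d0 e1] sh4[OF d0 e1] simp_thms conj_assoc)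
  next
    case (D i j)
    have PQ: "0 < real_of_int p + of_int q" using P Q by simp
    have a: "((of_int i + of_int j + 1 + \<epsilon>) / (of_int p + of_int q) \<in> {0..<(1::real)}) \<longleftrightarrow> 0 \<le> i+j+1 \<and> i+j+1 < p+q"
      using PQ nonneg_shift[OF e0 e2, of "i+j+1"] sh4[OF e0 e2, of "i+j+1" "p+q"] by (simp add: field_simps)
    have b: "(real_of_int i < (of_int i + of_int j + 1 + \<epsilon>) / (of_int p + of_int q) * of_int q - \<epsilon>) \<longleftrightarrow> real_of_int (i*(p+q)) < real_of_int ((i+j+1)*q) - \<epsilon> * of_int p"
      using PQ by (simp add: field_simps)
    have c: "((of_int i + of_int j + 1 + \<epsilon>) / (of_int p + of_int q) * of_int q - \<epsilon> < real_of_int i + 1) \<longleftrightarrow> real_of_int ((i+j+1)*q) - \<epsilon> * of_int p < real_of_int ((i+1)*(p+q))"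
      using PQ by (simp add: field_simps)
    have d: "(of_int i + of_int j + 1 + \<epsilon>) / (of_int p + of_int q) * of_int q - \<epsilon> + (of_int i + of_int j + 1 + \<epsilon>) / (of_int p + of_int q) * of_int p = real_of_int i + of_int j + 1"
      using split_frac[of "of_int p" "of_int q" "of_int i + of_int j + 1 + \<epsilon>" \<epsilon>] PQ by simp
    show ?thesis by (simp only: D pe.simps rel.simps ICS.simps a b c d sh1[OF d0 e1] sh2[OF d0 e1] simp_thms conj_assoc)
  qed
qed

lemma CL_iff:
  "(pe p q 0 e \<in> {0..1} \<and> rel e (pe p q 0 e * of_int q - 0) (pe p q 0 e * of_int p)) \<longleftrightarrow> ICL p q e"
proof -
  have P: "0 < real_of_int p" and Q: "0 < real_of_int q" using p0 q0 by auto
  show ?thesis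
  proof (cases e)
    case (H i j)
    have a: "(of_int j / of_int p \<in> {0..(1::real)}) \<longleftrightarrow> 0 \<le> j \<and> j \<le> p"
      using P by (simp add: field_simps)
    have b: "(real_of_int i < of_int j / of_int p * of_int q - 0) \<longleftrightarrow> real_of_int (i*p) < real_of_int (j*q)"
      using P by (simp add: field_simps)
    have c: "(of_int j / of_int p * of_int q - 0 < real_of_int i + 1) \<longleftrightarrow> real_of_int (j*q) < real_of_int (i*p + p)"
      using P by (simp add: field_simps)
    have y: "of_int j / of_int p * of_int p = (of_int j::real)" using P by simp
    show ?thesis by (simp only: H pe.simps rel.simps ICL.simps a b c y of_int_less_iff simp_thms conj_assoc)
  next
    case (V i j)
    have a: "((of_int i + 0) / of_int q \<in> {0..(1::real)}) \<longleftrightarrow> 0 \<le> i \<and> i \<le> q"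
      using Q by (simp add: field_simps)
    have b: "(real_of_int j < (of_int i + 0) / of_int q * of_int p) \<longleftrightarrow> real_of_int (j*q) < real_of_int (i*p)"
      using Q by (simp add: field_simps)
    have c: "((of_int i + 0) / of_int q * of_int p < real_of_int j + 1) \<longleftrightarrow> real_of_int (i*p) < real_of_int (j*q + q)"
      using Q by (simp add: field_simps)
    have y: "(of_int i + 0) / of_int q * of_int q - 0 = (of_int i::real)" using Q by simp
    show ?thesis by (simp only: V pe.simps rel.simps ICL.simps a b c y of_int_less_iff simp_thms conj_assoc)
  next
    case (D i j)
    have PQ: "0 < real_of_int p + of_int q" using P Q by simp
    have a: "((of_int i + of_int j + 1 + 0) / (of_int p + of_int q) \<in> {0..(1::real)}) \<longleftrightarrow> 0 \<le> i+j+1 \<and> i+j+1 \<le> p+q"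
    proof -
      have "((of_int i + of_int j + 1 + 0) / (of_int p + of_int q) \<in> {0..(1::real)}) \<longleftrightarrow> real_of_int 0 \<le> of_int (i+j+1) \<and> real_of_int (i+j+1) \<le> of_int (p+q)"
        using PQ by (simp add: field_simps)
      then show ?thesis by (simp only: of_int_le_iff)
    qed
    have b: "(real_of_int i < (of_int i + of_int j + 1 + 0) / (of_int p + of_int q) * of_int q - 0) \<longleftrightarrow> real_of_int (i*(p+q)) < real_of_int ((i+j+1)*q)"
      using PQ by (simp add: field_simps)
    have c: "((of_int i + of_int j + 1 + 0) / (of_int p + of_int q) * of_int q - 0 < real_of_int i + 1) \<longleftrightarrow> real_of_int ((i+j+1)*q) < real_of_int ((i+1)*(p+q))"
      using PQ by (simp add: field_simps)
    have d: "(of_int i + of_int j + 1 + 0) / (of_int p + of_int q) * of_int q - 0 + (of_int i + of_int j + 1 + 0) / (of_int p + of_int q) * of_int p = real_of_int i + of_int j + 1"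
      using split_frac[of "of_int p" "of_int q" "of_int i + of_int j + 1 + 0" 0] PQ by simp
    show ?thesis by (simp only: D pe.simps rel.simps ICL.simps a b c d of_int_less_iff simp_thms conj_assoc)
  qed
qed


lemma ICS_H: "ICS p q (H i j) \<longleftrightarrow> ICL p q (H i j) \<or> (i = -1 \<and> j = 0)"
proof
  assume a: "ICS p q (H i j)"
  show "ICL p q (H i j) \<or> (i = -1 \<and> j = 0)"
  proof (cases "j*q = i*p + p")
    case True
    then have "p dvd j*q" by (metis dvd_triv_right distrib_right mult_1)
    then have "p dvd j" using cop by (simp add: coprime_dvd_mult_left_iff)
    moreover have "0 \<le> j" "j < p" using a by auto
    ultimately have j: "j = 0" using zdvd_not_zless[of j p] by fastforce
    with True have "(i+1)*p = 0" by (simp add: algebra_simps)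
    with p0 j show ?thesis by simp
  next
    case False with a show ?thesis by auto
  qed
next
  assume a: "ICL p q (H i j) \<or> (i = -1 \<and> j = 0)"
  show "ICS p q (H i j)"
  proof (cases "ICL p q (H i j)")
    case True
    have "j \<noteq> p"
    proof
      assume "j = p"
      with True have "p*i < p*q" "p*q < p*(i+1)" by (auto simp: algebra_simps)
      then have "i < q" "q < i+1" using p0 by (simp_all add: mult_less_cancel_left_pos)
      then show False by simp
    qed
    with True show ?thesis by auto
  next
    case False with a p0 show ?thesis by auto
  qed
qed

lemma ICS_V: "ICS p q (V i j) \<longleftrightarrow> ICL p q (V i j) \<or> (i = 0 \<and> j = 0)"
proof
  assume a: "ICS p q (V i j)"
  show "ICL p q (V i j) \<or> (i = 0 \<and> j = 0)"
  proof (cases "j*q = i*p")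
    case True
    then have "q dvd i*p" by (metis dvd_triv_right)
    then have "q dvd i" using cop by (simp add: coprime_dvd_mult_left_iff coprime_commute)
    moreover have "0 \<le> i" "i < q" using a by auto
    ultimately have i: "i = 0" using zdvd_not_zless[of i q] by fastforce
    with True have "j*q = 0" by simp
    with q0 i show ?thesis by simp
  next
    case False with a show ?thesis by auto
  qed
next
  assume a: "ICL p q (V i j) \<or> (i = 0 \<and> j = 0)"
  show "ICS p q (V i j)"
  proof (cases "ICL p q (V i j)")
    case True
    have "i \<noteq> q"
    proof
      assume "i = q"
      with True have "q*j < q*p" "q*p < q*(j+1)" by (auto simp: algebra_simps)
      then have "j < p" "p < j+1" using q0 by (simp_all add: mult_less_cancel_left_pos)
      then show False by simp
    qed
    with True show ?thesis by auto
  next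
    case False with a q0 show ?thesis by auto
  qed
qed

lemma ICS_D: "ICS p q (D i j) \<longleftrightarrow> ICL p q (D i j) \<or> (i = -1 \<and> j = 0)"
proof
  assume a: "ICS p q (D i j)"
  show "ICL p q (D i j) \<or> (i = -1 \<and> j = 0)"
  proof (cases "(i+j+1)*q = (i+1)*(p+q)")
    case True
    have cop2: "coprime (p+q) q" using cop by (simp add: coprime_iff_gcd_eq_1)
    from True have "(p+q) dvd (i+j+1)*q" by (metis dvd_triv_right)
    then have "(p+q) dvd (i+j+1)" using cop2 by (simp add: coprime_dvd_mult_left_iff)
    moreover have "0 \<le> i+j+1" "i+j+1 < p+q" using a by auto
    ultimately have k: "i+j+1 = 0" using zdvd_not_zless[of "i+j+1" "p+q"] by fastforce
    with True have "(i+1)*(p+q) = 0" by simp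
    with p0 q0 k show ?thesis by simp
  next
    case False with a show ?thesis by auto
  qed
next
  assume a: "ICL p q (D i j) \<or> (i = -1 \<and> j = 0)"
  show "ICS p q (D i j)"
  proof (cases "ICL p q (D i j)")
    case True
    have "i+j+1 \<noteq> p+q"
    proof
      assume k: "i+j+1 = p+q"
      from True have h: "i*(p+q) < (i+j+1)*q" "(i+j+1)*q < (i+1)*(p+q)" by auto
      then have "(p+q)*i < (p+q)*q" "(p+q)*q < (p+q)*(i+1)" unfolding k by (simp_all add: mult.commute)
      then have "i < q" "q < i+1" using p0 q0 by (simp_all add: mult_less_cancel_left_pos)
      then show False by simp
    qed
    with True show ?thesis by auto
  next
    case False with a p0 q0 show ?thesis by auto
  qed
qed

lemma ICS_iff: "ICS p q e \<longleftrightarrow> ICL p q e \<or> e \<in> {H (-1) 0, D (-1) 0, V 0 0}"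
  by (cases e) (simp_all del: ICS.simps ICL.simps add: ICS_H ICS_V ICS_D)


abbreviation "MM \<equiv> p*q*(p+q)"

lemma MM_pos: "0 < MM" using p0 q0 by simp

abbreviation "MR \<equiv> real_of_int p * real_of_int q * (real_of_int p + real_of_int q)"

lemma MR_eq: "real_of_int MM = MR" by simp
lemma MR_pos: "0 < MR" using p0 q0 by simp

lemma pe_N': "pe p q \<epsilon> e * MR = of_int (NN p q e) + \<epsilon> * of_int (cc p q e)"
  using p0 q0 by (cases e) (simp_all add: field_simps)

lemma pe_N: "pe p q \<epsilon> e = (of_int (NN p q e) + \<epsilon> * of_int (cc p q e)) / MR"
proof -
  have "MR \<noteq> 0" using p0 q0 by simp
  then show ?thesis using pe_N'[of \<epsilon> e] nonzero_eq_divide_eq[of MR "pe p q \<epsilon> e"] by metis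
qed

lemma cc_bounds: "0 \<le> cc p q e \<and> cc p q e \<le> MM"
proof (cases e)
  case (V i j)
  have "p*(p+q)*1 \<le> p*(p+q)*q" using p0 q0 by (intro mult_left_mono) auto
  then show ?thesis using V p0 q0 by (simp add: algebra_simps)
next
  case (D i j)
  have "p*q*1 \<le> p*q*(p+q)" using p0 q0 by (intro mult_left_mono) auto
  then show ?thesis using D p0 q0 by simp
qed (use p0 q0 in simp)

lemma cc_boundsR: "0 \<le> real_of_int (cc p q e) \<and> real_of_int (cc p q e) \<le> MR"
proof -
  have "real_of_int 0 \<le> real_of_int (cc p q e) \<and> real_of_int (cc p q e) \<le> real_of_int MM"
    using cc_bounds[of e] by (simp only: of_int_le_iff)
  then show ?thesis unfolding MR_eq by simp
qed

lemma pe_order: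
  assumes "0 < \<epsilon>" "\<epsilon> * MR < 1" "NN p q e1 < NN p q e2"
  shows "pe p q \<epsilon> e1 < pe p q \<epsilon> e2"
proof -
  have "real_of_int (NN p q e1) + 1 \<le> of_int (NN p q e2)" using assms(3) by linarith
  moreover have "\<epsilon> * of_int (cc p q e1) \<le> \<epsilon> * MR"
    using cc_boundsR[of e1] assms(1) by (intro mult_left_mono) auto
  moreover have "0 \<le> \<epsilon> * of_int (cc p q e2)" using cc_boundsR[of e2] assms(1) by simp
  ultimately have "of_int (NN p q e1) + \<epsilon> * of_int (cc p q e1) < of_int (NN p q e2) + \<epsilon> * of_int (cc p q e2)"
    using assms(2) by linarith
  then show ?thesis unfolding pe_N by (rule divide_strict_right_mono[OF _ MR_pos])
qed

lemma pe0_N: "pe p q 0 e = of_int (NN p q e) / of_int MM"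
  using pe_N[of 0 e] by simp

definition SL where "SL = crossed {0..1} (0,0) (of_int q, of_int p)"
definition SE where "SE \<epsilon> = crossed {0..<1} (-\<epsilon>,0) (of_int q - \<epsilon>, of_int p)"

lemma A0: "((0::real), (0::real)) = (- 0, 0)" by simp
lemma B0: "(real_of_int q, real_of_int p) = (of_int q - 0, of_int p)" by simp

lemma SL_eq: "SL = {e. ICL p q e}"
  unfolding SL_def crossed_eq[OF A0 B0] using CL_iff by auto

lemma SL_real: "SL = {e. pe p q 0 e \<in> {0..1} \<and> rel e (pe p q 0 e * of_int q - 0) (pe p q 0 e * of_int p)}"
  unfolding SL_def crossed_eq[OF A0 B0] by simp

lemma SE_eq:
  assumes "0 < \<epsilon>" "\<epsilon> * of_int p < 1" "\<epsilon> < 1"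
  shows "SE \<epsilon> = SL \<union> {H (-1) 0, D (-1) 0, V 0 0}"
  unfolding SE_def crossed_eq[OF refl refl] SL_eq using CS_iff[OF assms] ICS_iff by auto

lemma SL_pos: "e \<in> SL \<Longrightarrow> 0 < NN p q e \<and> NN p q e \<le> MM"
proof -
  assume "e \<in> SL"
  then have a: "pe p q 0 e \<in> {0..1}" "rel e (pe p q 0 e * of_int q - 0) (pe p q 0 e * of_int p)"
    unfolding SL_real by auto
  have "pe p q 0 e \<noteq> 0"
  proof
    assume "pe p q 0 e = 0"
    with a have "rel e 0 0" by simp
    then show False by (cases e) auto
  qed
  with a(1) have "0 < pe p q 0 e" "pe p q 0 e \<le> 1" by auto
  then have "0 < real_of_int (NN p q e) / MR" "real_of_int (NN p q e) / MR \<le> 1"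
    unfolding pe0_N by auto
  then have "0 < real_of_int (NN p q e)" "real_of_int (NN p q e) \<le> real_of_int MM"
    using MR_pos unfolding MR_eq by (simp_all add: zero_less_divide_iff divide_le_eq_1_pos)
  then show ?thesis by (simp only: of_int_0_less_iff of_int_le_iff)
qed

lemma SL_inj: "inj_on (pe p q 0) SL"
  unfolding SL_def using pe_inj[OF A0 B0] by simp

lemma SL_finite: "finite SL"
proof -
  have "inj_on (NN p q) SL"
    using SL_inj MR_pos unfolding inj_on_def pe0_N by auto
  moreover have "NN p q ` SL \<subseteq> {0..MM}" using SL_pos by force
  then have "finite (NN p q ` SL)" by (rule finite_subset) simp
  ultimately show ?thesis using finite_imageD by blast
qed

lemma ICL_R: "ICL p q e \<Longrightarrow> ICL p q (RR p q e)"
  by (cases e) (auto simp: algebra_simps)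

lemma RR_RR: "RR p q (RR p q e) = e"
  by (cases e) auto

lemma pe0_R: "pe p q 0 (RR p q e) = 1 - pe p q 0 e"
  using p0 q0 by (cases e) (auto simp: field_simps)

lemma SL_R: "RR p q ` SL = SL"
proof
  show "RR p q ` SL \<subseteq> SL" using ICL_R unfolding SL_eq by auto
  show "SL \<subseteq> RR p q ` SL"
  proof
    fix e assume "e \<in> SL"
    then have "RR p q e \<in> SL" using ICL_R unfolding SL_eq by auto
    then show "e \<in> RR p q ` SL" using RR_RR[of e] by (metis image_eqI)
  qed
qed

lemma letter_eps:
  assumes "A = (- \<epsilon>, 0)" "B = (of_int q - \<epsilon>, of_int p)"
  shows "edge_letter A B e = (edge_gen e, \<not> (vv p q e - of_int p * \<epsilon> < 0))"
  using assms unfolding edge_letter_def right_side_def vv_def by (simp add: algebra_simps)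

lemma vv_half: "\<exists>k::int. 2 * vv p q e = of_int k"
proof (cases e)
  case (H i j)
  show ?thesis using H by (intro exI[of _ "q*(2*j) - p*(2*i+1)"]) (simp add: vv_def midpoint2_def field_simps)
next
  case (V i j)
  show ?thesis using V by (intro exI[of _ "q*(2*j+1) - p*(2*i)"]) (simp add: vv_def midpoint2_def field_simps)
next
  case (D i j)
  show ?thesis using D by (intro exI[of _ "q*(2*j+1) - p*(2*i+1)"]) (simp add: vv_def midpoint2_def field_simps)
qed

lemma vv_R: "vv p q (RR p q e) = - vv p q e"
  by (cases e) (simp_all add: vv_def midpoint2_def field_simps)

lemma gen_R: "edge_gen (RR p q e) = edge_gen e"
  by (cases e) auto

lemma letter_R:
  assumes "0 < \<epsilon>" "2 * of_int p * \<epsilon> < 1"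
  shows "inv_letter (edge_letter (0,0) (of_int q, of_int p) (RR p q e))
       = edge_letter (-\<epsilon>, 0) (of_int q - \<epsilon>, of_int p) e"
proof -
  obtain k where k: "2 * vv p q e = of_int k" using vv_half by blast
  have "vv p q e > 0 \<longleftrightarrow> vv p q e \<ge> of_int p * \<epsilon>"
  proof
    assume "vv p q e > 0"
    then have "k \<ge> 1" using k by simp
    then have "vv p q e \<ge> 1/2" using k by simp
    then show "vv p q e \<ge> of_int p * \<epsilon>" using assms by simp
  next
    assume "vv p q e \<ge> of_int p * \<epsilon>"
    then show "vv p q e > 0" using assms p0 by (smt (verit) mult_pos_pos of_int_pos)
  qed
  then show ?thesis
    unfolding letter_eps[OF A0 B0] letter_eps[OF refl refl] inv_letter_def vv_R gen_R by auto
qed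


lemma main_eq:
  assumes e0: "0 < \<epsilon>" and eM: "\<epsilon> * MR < 1"
  shows "read_word {0..<1} (-\<epsilon>,0) (of_int q - \<epsilon>, of_int p)
       = [(GX,True),(GY,True),(GZ,True)] @ word_inv (read_word {0..1} (0,0) (of_int q, of_int p))"
proof -
  have P1: "1 \<le> real_of_int p" and Q1: "1 \<le> real_of_int q" using p0 q0 by simp_all
  have "real_of_int p * 2 \<le> real_of_int p * (real_of_int q * (real_of_int p + real_of_int q))"
  proof (rule mult_left_mono)
    show "2 \<le> real_of_int q * (real_of_int p + real_of_int q)"
      using mult_mono[OF Q1, of 2 "real_of_int p + real_of_int q"] P1 Q1 by simp
  qed (use P1 in simp)
  then have "real_of_int p * 2 \<le> MR" by (simp only: mult.assoc)
  then have "\<epsilon> * (real_of_int p * 2) \<le> \<epsilon> * MR" using e0 by (intro mult_left_mono) auto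
  then have "2 * real_of_int p * \<epsilon> \<le> \<epsilon> * MR" by (simp only: ac_simps)
  with eM have e2P: "2 * real_of_int p * \<epsilon> < 1" by simp
  then have eP: "\<epsilon> * real_of_int p < 1" using e0 P1 by (simp add: algebra_simps)
  have e1: "\<epsilon> < 1" using eP P1 e0
    by (smt (verit) mult_le_cancel_left1)
  have "1 * \<epsilon> \<le> real_of_int p * \<epsilon>" using mult_right_mono[OF P1, of \<epsilon>] e0 by simp
  then have eh: "\<epsilon> * 2 < 1" using e2P by linarith
  define f0 where "f0 = cross_param {0..1} ((0::real),(0::real)) (real_of_int q, real_of_int p)"
  define fe where "fe = cross_param {0..<1} (-\<epsilon>,0) (real_of_int q - \<epsilon>, real_of_int p)"
  define xs where "xs = sorted_key_list_of_set f0 SL"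
  have f0pe: "\<And>e. e \<in> SL \<Longrightarrow> f0 e = pe p q 0 e"
    unfolding f0_def SL_def using cross_param_eq[OF A0 B0] by simp
  have fepe: "\<And>e. e \<in> SE \<epsilon> \<Longrightarrow> fe e = pe p q \<epsilon> e"
    unfolding fe_def SE_def using cross_param_eq[OF refl refl] by simp
  have inj0: "inj_on f0 SL" unfolding f0_def SL_def using cp_inj[OF A0 B0] by simp
  have inje: "inj_on fe (SE \<epsilon>)" unfolding fe_def SE_def using cp_inj[OF refl refl] by simp
  have SEfin: "finite (SE \<epsilon>)" using SE_eq[OF e0 eP e1] SL_finite by simp
  have xsp: "sorted_wrt (<) (map f0 xs)" "set xs = SL"
    using skl_props[OF SL_finite inj0] unfolding xs_def by auto
  have xs0: "sorted_wrt (\<lambda>a b. pe p q 0 a < pe p q 0 b) xs"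
    using xsp f0pe unfolding sorted_wrt_map by (auto elim!: sorted_wrt_mono_rel[rotated])
  have revxs: "rev xs = map (RR p q) xs"
  proof -
    have "sorted_key_list_of_set f0 SL = rev (map (RR p q) xs)"
    proof (rule skl_unique[OF SL_finite inj0])
      show "set (rev (map (RR p q) xs)) = SL" using xsp SL_R by simp
      have "sorted_wrt (\<lambda>a b. f0 (RR p q b) < f0 (RR p q a)) xs"
      proof (rule sorted_wrt_mono_rel[OF _ xs0])
        fix a b assume "a \<in> set xs" "b \<in> set xs" "pe p q 0 a < pe p q 0 b"
        moreover have "RR p q a \<in> SL" "RR p q b \<in> SL" using \<open>a \<in> set xs\<close> \<open>b \<in> set xs\<close> xsp SL_R by auto
        ultimately show "f0 (RR p q b) < f0 (RR p q a)" using f0pe pe0_R by simp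
      qed
      then show "sorted_wrt (<) (map f0 (rev (map (RR p q) xs)))"
        by (simp add: sorted_wrt_rev sorted_wrt_map rev_map)
    qed
    then have "xs = rev (map (RR p q) xs)" unfolding xs_def .
    then show ?thesis by (metis rev_rev_ident)
  qed
  define ys where "ys = [H (-1) 0, D (-1) 0, V 0 0] @ xs"
  have ysS: "set ys = SE \<epsilon>" unfolding ys_def using SE_eq[OF e0 eP e1] xsp by auto
  have yssorted: "sorted_wrt (<) (map fe ys)"
  proof -
    have "sorted_wrt (\<lambda>a b. pe p q \<epsilon> a < pe p q \<epsilon> b) ys"
      unfolding ys_def sorted_wrt_append
    proof (intro conjI)
      have Q: "0 < real_of_int q" using q0 by simp
      have "\<epsilon> / (real_of_int p + real_of_int q) < \<epsilon> / real_of_int q"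
        using e0 p0 q0 by (simp add: frac_less2)
      then show "sorted_wrt (\<lambda>a b. pe p q \<epsilon> a < pe p q \<epsilon> b) [H (- 1) 0, D (- 1) 0, V 0 0]"
        using e0 p0 q0 by simp
      show "sorted_wrt (\<lambda>a b. pe p q \<epsilon> a < pe p q \<epsilon> b) xs"
      proof (rule sorted_wrt_mono_rel[OF _ xs0])
        fix a b assume "pe p q 0 a < pe p q 0 b"
        then have "real_of_int (NN p q a) < real_of_int (NN p q b)"
          unfolding pe0_N using MR_pos by (simp add: divide_strict_right_mono_neg divide_less_cancel)
        then have "NN p q a < NN p q b" by (simp only: of_int_less_iff)
        then show "pe p q \<epsilon> a < pe p q \<epsilon> b" using pe_order e0 eM by blast
      qed
      show "\<forall>x\<in>set [H (- 1) 0, D (- 1) 0, V 0 0]. \<forall>y\<in>set xs. pe p q \<epsilon> x < pe p q \<epsilon> y"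
      proof (intro ballI)
        fix x y assume "x \<in> set [H (- 1) 0, D (- 1) 0, V 0 0]" "y \<in> set xs"
        then have "NN p q x = 0" "0 < NN p q y" using SL_pos xsp by auto
        then show "pe p q \<epsilon> x < pe p q \<epsilon> y" using pe_order e0 eM by simp
      qed
    qed
    then show ?thesis using fepe ysS unfolding sorted_wrt_map
      by (auto elim!: sorted_wrt_mono_rel[rotated])
  qed
  have ysdef: "sorted_key_list_of_set fe (SE \<epsilon>) = ys"
    by (rule skl_unique[OF SEfin inje yssorted ysS])
  have l3: "map (edge_letter (-\<epsilon>, 0) (real_of_int q - \<epsilon>, real_of_int p)) [H (-1) 0, D (-1) 0, V 0 0]
          = [(GX,True),(GY,True),(GZ,True)]"
    using e2P e0 P1 Q1 eh unfolding letter_eps[OF refl refl] by (simp add: vv_def midpoint2_def)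
  have lx: "word_inv (map (edge_letter (0,0) (real_of_int q, real_of_int p)) xs)
         = map (edge_letter (-\<epsilon>, 0) (real_of_int q - \<epsilon>, real_of_int p)) xs"
  proof -
    have "word_inv (map (edge_letter (0,0) (real_of_int q, real_of_int p)) xs)
        = map inv_letter (map (edge_letter (0,0) (real_of_int q, real_of_int p)) (rev xs))"
      unfolding word_inv_def by (simp add: rev_map)
    also have "\<dots> = map (\<lambda>e. inv_letter (edge_letter (0,0) (real_of_int q, real_of_int p) (RR p q e))) xs"
      unfolding revxs by simp
    also have "\<dots> = map (edge_letter (-\<epsilon>, 0) (real_of_int q - \<epsilon>, real_of_int p)) xs"
      using letter_R[OF e0 e2P] by simp
    finally show ?thesis .
  qed
  show ?thesis
    unfolding read_word_def
    using ysdef lx l3 unfolding fe_def f0_def SE_def SL_def xs_def ys_def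
    by simp
qed

end

theorem lemma5p4:
  fixes t :: rat
  assumes "0 < t"
  shows "\<exists>\<epsilon>0 > 0. \<forall>\<epsilon>. 0 < \<epsilon> \<and> \<epsilon> < \<epsilon>0 \<longrightarrow>
           fg_eq (omega_bar_eps t \<epsilon>)
                 ([(GX, True), (GY, True), (GZ, True)] @ word_inv (omega t))"
proof -
  obtain p q where pq: "quotient_of t = (p, q)" by (cases "quotient_of t") auto
  have q0: "0 < q" using quotient_of_denom_pos[OF pq] .
  have cop: "coprime p q" using quotient_of_coprime[OF pq] .
  have "t = of_int p / of_int q" using quotient_of_div[OF pq] .
  with assms q0 have p0: "0 < p" by (simp add: zero_less_divide_iff)
  define MR where "MR = real_of_int p * real_of_int q * (real_of_int p + real_of_int q)"
  have MR0: "0 < MR" unfolding MR_def using p0 q0 by simp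
  show ?thesis
  proof (intro exI[of _ "1 / MR"] conjI allI impI)
    show "0 < 1 / MR" using MR0 by simp
    fix \<epsilon> :: real assume e: "0 < \<epsilon> \<and> \<epsilon> < 1 / MR"
    then have "\<epsilon> * MR < 1" using MR0 by (simp add: less_divide_eq)
    then have "read_word {0..<1} (-\<epsilon>,0) (of_int q - \<epsilon>, of_int p)
       = [(GX,True),(GY,True),(GZ,True)] @ word_inv (read_word {0..1} (0,0) (of_int q, of_int p))"
      using main_eq[OF p0 q0 cop] e unfolding MR_def by blast
    then show "fg_eq (omega_bar_eps t \<epsilon>) ([(GX, True), (GY, True), (GZ, True)] @ word_inv (omega t))"
      unfolding omega_bar_eps_def omega_def pq fg_eq_def by simp
  qed
qed

end
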